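(* For all integers $d\ge1$ and $p\ge0$, the best constant $C_{p,d}$ in $$\|\partial_{x_i}v\|_{L^2(K^d)}\le C_{p,d}\|v\|_{L^2(K^d)}\qquad\forall v\in\mathbb{P}_p(K^d),\ \forall i\in\{1,\dots,d\}$$ satisfies $C_{p,d}\le\frac{\sqrt5}{4}(2\sqrt2)^d\,C_{p,1}$, where $K^d:=\{x\in\mathbb{R}^d: x_i\ge0\ \forall i,\ \sum_i x_i\le1\}$ is the unit simplex.
   Context: $\mathbb{P}_p(K^d)$ is the space of polynomials of total degree at most $p$ on $K^d$. $C_{p,1}$ denotes the best constant in the univariate inverse inequality $\|v'\|_{L^2(0,1)}\le C_{p,1}\|v\|_{L^2(0,1)}$ for all polynomials $v$ of degree at most $p$ on $(0,1)$. *)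

theory Defs
  imports "HOL-Analysis.Analysis" "HOL-Computational_Algebra.Polynomial"
begin

definition unit_simplex :: "(real ^ 'n::finite) set" where
  "unit_simplex = {x. (\<forall>i. 0 \<le> x $ i) \<and> (\<Sum>i\<in>UNIV. x $ i) \<le> 1}"

definition multi_indices :: "nat \<Rightarrow> ('n::finite \<Rightarrow> nat) set" where
  "multi_indices p = {\<alpha>. (\<Sum>i\<in>UNIV. \<alpha> i) \<le> p}"

definition poly_space :: "nat \<Rightarrow> (real ^ 'n::finite \<Rightarrow> real) set" where
  "poly_space p = {v. \<exists>c :: ('n \<Rightarrow> nat) \<Rightarrow> real.
      v = (\<lambda>x. \<Sum>\<alpha>\<in>multi_indices p. c \<alpha> * (\<Prod>i\<in>UNIV. (x $ i) ^ \<alpha> i))}"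

definition partial :: "'n::finite \<Rightarrow> (real ^ 'n \<Rightarrow> real) \<Rightarrow> real ^ 'n \<Rightarrow> real" where
  "partial i v x = deriv (\<lambda>t. v (x + t *\<^sub>R axis i 1)) 0"

definition L2_norm_on :: "'a::euclidean_space set \<Rightarrow> ('a \<Rightarrow> real) \<Rightarrow> real" where
  "L2_norm_on S v = sqrt (integral S (\<lambda>x. (v x)\<^sup>2))"

definition best_const_simplex :: "'n::finite itself \<Rightarrow> nat \<Rightarrow> real" where
  "best_const_simplex _ p = Inf {C. 0 \<le> C \<and>
     (\<forall>v \<in> (poly_space p :: (real ^ 'n \<Rightarrow> real) set). \<forall>i::'n.
        L2_norm_on (unit_simplex :: (real ^ 'n) set) (partial i v)
          \<le> C * L2_norm_on (unit_simplex :: (real ^ 'n) set) v)}"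

definition best_const_1 :: "nat \<Rightarrow> real" where
  "best_const_1 p = Inf {C. 0 \<le> C \<and>
     (\<forall>q :: real poly. degree q \<le> p \<longrightarrow>
        L2_norm_on {0..1} (poly (pderiv q)) \<le> C * L2_norm_on {0..1} (poly q))}"

end

theory Submission
  imports Defs
begin


definition NN :: "nat \<Rightarrow> real poly \<Rightarrow> real" where
  "NN p q = (\<Sum>k\<le>p. (coeff q k)\<^sup>2)"

lemma NN_nonneg: "0 \<le> NN p q" unfolding NN_def by (simp add: sum_nonneg)

lemma intc01: "(\<lambda>x. (poly q x)\<^sup>2 :: real) integrable_on {a..b}"
  by (intro integrable_continuous_interval continuous_intros)

lemma poly_sum_le:
  fixes q :: "real poly"
  assumes "degree q \<le> p"
  shows "poly q x = (\<Sum>k\<le>p. coeff q k * x ^ k)"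
proof -
  have "poly q x = (\<Sum>k\<le>degree q. coeff q k * x ^ k)" by (rule poly_altdef)
  also have "\<dots> = (\<Sum>k\<le>p. coeff q k * x ^ k)"
    by (rule sum.mono_neutral_left) (use assms in \<open>auto simp: coeff_eq_0\<close>)
  finally show ?thesis .
qed

lemma ptw:
  fixes q :: "real poly"
  assumes "degree q \<le> p" "0 \<le> x" "x \<le> 1"
  shows "(poly q x)\<^sup>2 \<le> (p + 1) * NN p q"
proof -
  have "(poly q x)\<^sup>2 = (\<Sum>k\<le>p. coeff q k * x ^ k)\<^sup>2" using assms(1) by (simp add: poly_sum_le)
  also have "\<dots> \<le> (\<Sum>k\<le>p. (coeff q k)\<^sup>2) * (\<Sum>k\<le>p. (x ^ k)\<^sup>2)" by (rule Cauchy_Schwarz_ineq_sum)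
  also have "\<dots> \<le> (\<Sum>k\<le>p. (coeff q k)\<^sup>2) * (\<Sum>k\<le>p. 1)"
  proof (intro mult_left_mono sum_mono sum_nonneg)
    fix k :: nat
    have "x ^ k \<le> 1" using assms by (simp add: power_le_one)
    moreover have "0 \<le> x ^ k" using assms by simp
    ultimately show "(x ^ k)\<^sup>2 \<le> 1" by (simp add: power_le_one)
  qed simp
  finally show ?thesis by (simp add: NN_def mult.commute add.commute)
qed

lemma NN_pderiv:
  fixes q :: "real poly"
  assumes "degree q \<le> p"
  shows "NN p (pderiv q) \<le> (p + 1)\<^sup>2 * NN p q"
proof -
  have "NN p (pderiv q) = (\<Sum>k\<le>p. (real (Suc k))\<^sup>2 * (coeff q (Suc k))\<^sup>2)"
    unfolding NN_def by (simp add: coeff_pderiv power_mult_distrib)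
  also have "\<dots> \<le> (\<Sum>k\<le>p. (real p + 1)\<^sup>2 * (coeff q (Suc k))\<^sup>2)"
    by (intro sum_mono mult_right_mono power_mono) auto
  also have "\<dots> = (real p + 1)\<^sup>2 * (\<Sum>k\<le>p. (coeff q (Suc k))\<^sup>2)" by (simp add: sum_distrib_left)
  also have "(\<Sum>k\<le>p. (coeff q (Suc k))\<^sup>2) \<le> NN p q"
  proof -
    have "(\<Sum>k\<le>Suc p. (coeff q k)\<^sup>2) = (coeff q 0)\<^sup>2 + (\<Sum>k\<le>p. (coeff q (Suc k))\<^sup>2)"
      by (rule sum.atMost_Suc_shift)
    moreover have "(\<Sum>k\<le>Suc p. (coeff q k)\<^sup>2) = NN p q"
      using assms by (simp add: NN_def coeff_eq_0)
    moreover have "0 \<le> (coeff q 0)\<^sup>2" by simp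
    ultimately show ?thesis by linarith
  qed
  then have "(real p + 1)\<^sup>2 * (\<Sum>k\<le>p. (coeff q (Suc k))\<^sup>2) \<le> (real p + 1)\<^sup>2 * NN p q"
    by (rule mult_left_mono) simp
  finally show ?thesis by simp
qed

lemma upper:
  fixes q :: "real poly"
  assumes "degree q \<le> p"
  shows "integral {0..1} (\<lambda>x. (poly (pderiv q) x)\<^sup>2) \<le> (p + 1)^3 * NN p q"
proof -
  have dq: "degree (pderiv q) \<le> p" using assms degree_pderiv[of q] by simp
  have "integral {0..1} (\<lambda>x. (poly (pderiv q) x)\<^sup>2) \<le> integral {0..1} (\<lambda>x::real. (p + 1)^3 * NN p q)"
  proof (rule integral_le[OF intc01])
    fix x :: real assume x: "x \<in> {0..1}"
    have "(poly (pderiv q) x)\<^sup>2 \<le> (p + 1) * NN p (pderiv q)" using ptw[OF dq, of x] x by (simp add: add.commute)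
    also have "\<dots> \<le> (p + 1) * ((p + 1)\<^sup>2 * NN p q)"
      using NN_pderiv[OF assms] by (intro mult_left_mono) (auto simp: add.commute)
    also have "\<dots> = (p + 1)^3 * NN p q" by (simp add: power2_eq_square power3_eq_cube algebra_simps)
    finally show "(poly (pderiv q) x)\<^sup>2 \<le> (p + 1)^3 * NN p q" .
  qed (intro integrable_continuous_interval continuous_intros)
  then show ?thesis by (simp add: add.commute)
qed

lemma int01_nonneg: "0 \<le> integral {0..1} (\<lambda>x. (poly q x)\<^sup>2 :: real)"
  by (rule Henstock_Kurzweil_Integration.integral_nonneg[OF intc01]) simp

lemma NN_smult: "NN p (smult a q) = a\<^sup>2 * NN p q"
  unfolding NN_def by (simp add: power_mult_distrib sum_distrib_left)

lemma lower: "\<exists>m>0. \<forall>q::real poly. degree q \<le> p \<longrightarrow> m * NN p q \<le> integral {0..1} (\<lambda>x. (poly q x)\<^sup>2)"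
proof (rule ccontr)
  assume H: "\<not> ?thesis"
  have "\<forall>n::nat. \<exists>q. degree q \<le> p \<and> integral {0..1} (\<lambda>x. (poly q x)\<^sup>2) < (1 / (real n + 1)) * NN p q"
  proof
    fix n :: nat
    have "0 < 1 / (real n + 1)" by simp
    from H have "\<forall>m>0. \<exists>q. degree q \<le> p \<and> integral {0..1} (\<lambda>x. (poly q x)\<^sup>2) < m * NN p q"
      by (auto simp: not_le)
    with \<open>0 < 1 / (real n + 1)\<close> show "\<exists>q. degree q \<le> p \<and> integral {0..1} (\<lambda>x. (poly q x)\<^sup>2) < (1 / (real n + 1)) * NN p q"
      by blast
  qed
  then obtain Q where dQ: "\<And>n. degree (Q n) \<le> p"
    and IQ: "\<And>n. integral {0..1} (\<lambda>x. (poly (Q n) x)\<^sup>2) < (1 / (real n + 1)) * NN p (Q n)"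
    by metis
  have Npos: "0 < NN p (Q n)" for n
  proof -
    have "0 < (1 / (real n + 1)) * NN p (Q n)" using IQ[of n] int01_nonneg[of "Q n"] by linarith
    then show ?thesis by (simp add: zero_less_divide_iff add_pos_nonneg)
  qed
  define R where "R n = smult (1 / sqrt (NN p (Q n))) (Q n)" for n
  have dR: "degree (R n) \<le> p" for n using degree_smult_le[of _ "Q n"] dQ[of n] unfolding R_def by (meson order_trans)
  have NR: "NN p (R n) = 1" for n
    using Npos[of n] unfolding R_def NN_smult by (simp add: power_divide)
  have IR: "integral {0..1} (\<lambda>x. (poly (R n) x)\<^sup>2) < 1 / (real n + 1)" for n
  proof -
    have "integral {0..1} (\<lambda>x. (poly (R n) x)\<^sup>2) = integral {0..1} (\<lambda>x. (poly (Q n) x)\<^sup>2) / NN p (Q n)"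
      using Npos[of n] unfolding R_def by (simp add: power_mult_distrib power_divide)
    also have "\<dots> < 1 / (real n + 1)"
      using IQ[of n] Npos[of n] by (simp add: divide_less_eq)
    finally show ?thesis .
  qed
  have bnd: "\<bar>coeff (R n) k\<bar> \<le> 1" if "k \<le> p" for n k
  proof -
    have "(coeff (R n) k)\<^sup>2 \<le> NN p (R n)" unfolding NN_def
      by (rule member_le_sum[where f="\<lambda>k. (coeff (R n) k)\<^sup>2"]) (use that in auto)
    then have "(coeff (R n) k)\<^sup>2 \<le> 1" using NR by simp
    then show ?thesis by (simp add: abs_square_le_1)
  qed
  have "\<forall>\<delta>\<subseteq>{..p}. \<exists>l::nat \<Rightarrow> real. \<exists>r::nat\<Rightarrow>nat.
    strict_mono r \<and> (\<forall>\<epsilon>>0. eventually (\<lambda>n. \<forall>i\<in>\<delta>. dist ((\<lambda>k. coeff (R (r n)) k) i) (l i) < \<epsilon>) sequentially)"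
  proof (rule compact_lemma_general[where proj="\<lambda>x k. x k" and unproj="\<lambda>x. x"])
    fix k assume k: "k \<in> {..p}"
    show "bounded ((\<lambda>x. x k) ` range (\<lambda>n k. coeff (R n) k))"
      unfolding bounded_iff using bnd k by auto
  qed auto
  then obtain l :: "nat \<Rightarrow> real" and r where r: "strict_mono r"
    and conv: "\<And>\<epsilon>. \<epsilon> > 0 \<Longrightarrow> eventually (\<lambda>n. \<forall>i\<in>{..p}. dist (coeff (R (r n)) i) (l i) < \<epsilon>) sequentially"
    by blast
  have lim: "(\<lambda>n. coeff (R (r n)) k) \<longlonglongrightarrow> l k" if "k \<le> p" for k
  proof (rule tendstoI)
    fix e :: real assume "0 < e"
    from conv[OF this] show "eventually (\<lambda>n. dist (coeff (R (r n)) k) (l k) < e) sequentially"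
      by eventually_elim (use that in auto)
  qed
  define L where "L = (\<Sum>k\<le>p. monom (l k) k)"
  have cL: "coeff L k = l k" if "k \<le> p" for k
    using that by (simp add: L_def coeff_sum coeff_monom)
  have dL: "degree L \<le> p" unfolding L_def
    by (rule degree_sum_le) (auto intro: order_trans[OF degree_monom_le])
  have NL: "NN p L = 1"
  proof -
    have "(\<lambda>n. NN p (R (r n))) \<longlonglongrightarrow> (\<Sum>k\<le>p. (l k)\<^sup>2)"
      unfolding NN_def by (intro tendsto_intros lim) auto
    moreover have "(\<lambda>n. NN p (R (r n))) \<longlonglongrightarrow> 1" using NR by simp
    ultimately have "(\<Sum>k\<le>p. (l k)\<^sup>2) = 1" using LIMSEQ_unique by blast
    then show ?thesis unfolding NN_def by (simp add: cL)
  qed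
  define u where "u n = 2 * inverse (real (Suc (r n))) + 2 * ((real p + 1) * NN p (L - R (r n)))" for n
  have ule: "integral {0..1} (\<lambda>x. (poly L x)\<^sup>2) \<le> u n" for n
  proof -
    define D where "D = L - R (r n)"
    have dD: "degree D \<le> p" unfolding D_def using degree_diff_le[OF dL dR] .
    have "integral {0..1} (\<lambda>x. (poly L x)\<^sup>2) \<le> integral {0..1} (\<lambda>x. 2 * (poly (R (r n)) x)\<^sup>2 + 2 * (poly D x)\<^sup>2)"
    proof (rule integral_le)
      fix x :: real
      have "poly L x = poly (R (r n)) x + poly D x" by (simp add: D_def)
      then show "(poly L x)\<^sup>2 \<le> 2 * (poly (R (r n)) x)\<^sup>2 + 2 * (poly D x)\<^sup>2"
      proof -
        have "0 \<le> (poly (R (r n)) x - poly D x)\<^sup>2" by simp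
        then show ?thesis using \<open>poly L x = poly (R (r n)) x + poly D x\<close>
          by (simp add: power2_diff power2_sum)
      qed
    qed (auto intro!: integrable_continuous_interval continuous_intros)
    also have "\<dots> = 2 * integral {0..1} (\<lambda>x. (poly (R (r n)) x)\<^sup>2) + 2 * integral {0..1} (\<lambda>x. (poly D x)\<^sup>2)"
      by (subst integral_add) (auto intro!: integrable_continuous_interval continuous_intros)
    also have "\<dots> \<le> 2 * inverse (real (Suc (r n))) + 2 * ((real p + 1) * NN p D)"
    proof (intro add_mono mult_left_mono)
      show "integral {0..1} (\<lambda>x. (poly (R (r n)) x)\<^sup>2) \<le> inverse (real (Suc (r n)))"
        using IR[of "r n"] by (simp add: inverse_eq_divide add.commute)
      have "integral {0..1} (\<lambda>x. (poly D x)\<^sup>2) \<le> integral {0..1} (\<lambda>x::real. (real p + 1) * NN p D)"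
        by (rule integral_le) (auto intro!: integrable_continuous_interval continuous_intros ptw[OF dD])
      then show "integral {0..1} (\<lambda>x. (poly D x)\<^sup>2) \<le> (real p + 1) * NN p D" by simp
    qed auto
    finally show ?thesis by (simp add: u_def D_def)
  qed
  have "u \<longlonglongrightarrow> 2 * 0 + 2 * ((real p + 1) * (\<Sum>k\<le>p. (l k - l k)\<^sup>2))"
  proof -
    have "(\<lambda>n. inverse (real (Suc (r n)))) \<longlonglongrightarrow> 0"
      using LIMSEQ_subseq_LIMSEQ[OF LIMSEQ_inverse_real_of_nat r] by (simp add: comp_def)
    moreover have "(\<lambda>n. NN p (L - R (r n))) \<longlonglongrightarrow> (\<Sum>k\<le>p. (l k - l k)\<^sup>2)"
    proof -
      have "NN p (L - R (r n)) = (\<Sum>k\<le>p. (l k - coeff (R (r n)) k)\<^sup>2)" for n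
        unfolding NN_def by (intro sum.cong) (auto simp: cL)
      moreover have "(\<lambda>n. (\<Sum>k\<le>p. (l k - coeff (R (r n)) k)\<^sup>2)) \<longlonglongrightarrow> (\<Sum>k\<le>p. (l k - l k)\<^sup>2)"
        by (intro tendsto_intros lim) auto
      ultimately show ?thesis by simp
    qed
    ultimately show ?thesis unfolding u_def by (intro tendsto_intros)
  qed
  then have "u \<longlonglongrightarrow> 0" by simp
  then have I0: "integral {0..1} (\<lambda>x. (poly L x)\<^sup>2) \<le> 0"
    by (rule LIMSEQ_le_const) (use ule in auto)
  have I00: "((\<lambda>x. (poly L x)\<^sup>2) has_integral 0) (cbox 0 (1::real))"
  proof -
    have "integral {0..1} (\<lambda>x. (poly L x)\<^sup>2) = 0" using I0 int01_nonneg[of L] by linarith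
    then show ?thesis using integrable_integral[OF intc01[of L 0 1]] by simp
  qed
  have z: "poly L x = 0" if "x \<in> {0..1}" for x
  proof -
    have "(poly L x)\<^sup>2 = 0"
      by (rule has_integral_0_cbox_imp_0[OF _ _ I00]) (use that in \<open>auto intro!: continuous_intros\<close>)
    then show ?thesis by simp
  qed
  have "L = 0"
  proof (rule ccontr)
    assume "L \<noteq> 0"
    then have "finite {x. poly L x = 0}" by (rule poly_roots_finite)
    moreover have "{0..1::real} \<subseteq> {x. poly L x = 0}" using z by auto
    ultimately have "finite {0..1::real}" by (rule finite_subset[rotated])
    then show False using infinite_Icc[of "0::real" 1] by simp
  qed
  then have "NN p L = 0" by (simp add: NN_def)
  then show False using NL by simp
qed

lemma C1_nonempty: "\<exists>C\<ge>0. \<forall>q::real poly. degree q \<le> p \<longrightarrow>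
   L2_norm_on {0..1} (poly (pderiv q)) \<le> C * L2_norm_on {0..1} (poly q)"
proof -
  obtain m where m: "0 < m" and lo: "\<And>q::real poly. degree q \<le> p \<Longrightarrow> m * NN p q \<le> integral {0..1} (\<lambda>x. (poly q x)\<^sup>2)"
    using lower[of p] by blast
  define C where "C = sqrt ((real p + 1)^3 / m)"
  show ?thesis
  proof (intro exI[of _ C] conjI allI impI)
    show "0 \<le> C" using m by (simp add: C_def)
    fix q :: "real poly" assume dq: "degree q \<le> p"
    have "integral {0..1} (\<lambda>x. (poly (pderiv q) x)\<^sup>2) \<le> (real p + 1)^3 * NN p q"
      using upper[OF dq] .
    also have "\<dots> = ((real p + 1)^3 / m) * (m * NN p q)" using m by simp
    also have "\<dots> \<le> ((real p + 1)^3 / m) * integral {0..1} (\<lambda>x. (poly q x)\<^sup>2)"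
      by (rule mult_left_mono[OF lo[OF dq]]) (use m in simp)
    finally have "sqrt (integral {0..1} (\<lambda>x. (poly (pderiv q) x)\<^sup>2)) \<le> sqrt (((real p + 1)^3 / m) * integral {0..1} (\<lambda>x. (poly q x)\<^sup>2))"
      by (rule real_sqrt_le_mono)
    then show "L2_norm_on {0..1} (poly (pderiv q)) \<le> C * L2_norm_on {0..1} (poly q)"
      unfolding L2_norm_on_def C_def real_sqrt_mult[symmetric] .
  qed
qed



lemma line_fubini:
  fixes F :: "real^'n \<Rightarrow> ennreal" and w :: "real^'n" and i :: 'n
  assumes F[measurable]: "F \<in> borel_measurable borel" and wi: "w $ i = 1"
  shows "(\<integral>\<^sup>+x. F x \<partial>lborel) =
    (\<integral>\<^sup>+x. indicator {x. 0 \<le> x$i \<and> x$i \<le> 1} x * (\<integral>\<^sup>+s. F (x + s *\<^sub>R w) \<partial>lborel) \<partial>lborel)"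
proof -
  define \<psi> :: "real^'n \<Rightarrow> ennreal" where "\<psi> = indicator {x. 0 \<le> x$i \<and> x$i \<le> 1}"
  have [measurable]: "\<psi> \<in> borel_measurable borel" unfolding \<psi>_def
    by (intro borel_measurable_indicator) (auto intro!: borel_closed closed_Collect_conj closed_Collect_le continuous_intros)
  have "(\<integral>\<^sup>+x. \<psi> x * (\<integral>\<^sup>+s. F (x + s *\<^sub>R w) \<partial>lborel) \<partial>lborel)
      = (\<integral>\<^sup>+x. (\<integral>\<^sup>+s. \<psi> x * F (x + s *\<^sub>R w) \<partial>lborel) \<partial>lborel)"
    by (subst nn_integral_cmult) auto
  also have "\<dots> = (\<integral>\<^sup>+s. (\<integral>\<^sup>+x. \<psi> x * F (x + s *\<^sub>R w) \<partial>lborel) \<partial>lborel)"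
    by (rule lborel_pair.Fubini'[symmetric]) measurable
  also have "\<dots> = (\<integral>\<^sup>+s. (\<integral>\<^sup>+y. \<psi> (y - s *\<^sub>R w) * F y \<partial>lborel) \<partial>lborel)"
  proof (rule nn_integral_cong)
    fix s :: real
    have "(\<integral>\<^sup>+y. \<psi> (y - s *\<^sub>R w) * F y \<partial>lborel) = 
          (\<integral>\<^sup>+y. \<psi> (y - s *\<^sub>R w) * F y \<partial>(distr lborel borel ((+) (s *\<^sub>R w))))"
      by (simp add: lborel_distr_plus)
    also have "\<dots> = (\<integral>\<^sup>+x. \<psi> x * F (x + s *\<^sub>R w) \<partial>lborel)"
      by (subst nn_integral_distr) (auto simp: add.commute)
    finally show "(\<integral>\<^sup>+x. \<psi> x * F (x + s *\<^sub>R w) \<partial>lborel) = (\<integral>\<^sup>+y. \<psi> (y - s *\<^sub>R w) * F y \<partial>lborel)" by simp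
  qed
  also have "\<dots> = (\<integral>\<^sup>+y. (\<integral>\<^sup>+s. \<psi> (y - s *\<^sub>R w) * F y \<partial>lborel) \<partial>lborel)"
    by (rule lborel_pair.Fubini') measurable
  also have "\<dots> = (\<integral>\<^sup>+y. F y \<partial>lborel)"
  proof (rule nn_integral_cong)
    fix y :: "real^'n"
    have "(\<integral>\<^sup>+s. \<psi> (y - s *\<^sub>R w) \<partial>lborel) = (\<integral>\<^sup>+s. indicator {y$i - 1 .. y$i} s \<partial>lborel)"
      by (rule nn_integral_cong) (auto simp: \<psi>_def indicator_def wi)
    also have "\<dots> = 1" by simp
    finally have "(\<integral>\<^sup>+s. \<psi> (y - s *\<^sub>R w) \<partial>lborel) = 1" .
    then show "(\<integral>\<^sup>+s. \<psi> (y - s *\<^sub>R w) * F y \<partial>lborel) = F y"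
      by (subst nn_integral_multc) auto
  qed
  finally show ?thesis unfolding \<psi>_def by simp
qed



definition dd :: "real^'n \<Rightarrow> (real^'n \<Rightarrow> real) \<Rightarrow> real^'n \<Rightarrow> real" where
  "dd w v x = deriv (\<lambda>t. v (x + t *\<^sub>R w)) 0"

definition pfun :: "nat \<Rightarrow> (('n::finite \<Rightarrow> nat) \<Rightarrow> real) \<Rightarrow> real^'n \<Rightarrow> real" where
  "pfun p c = (\<lambda>x. \<Sum>\<alpha>\<in>multi_indices p. c \<alpha> * (\<Prod>i\<in>UNIV. (x $ i) ^ \<alpha> i))"

definition pder :: "nat \<Rightarrow> (('n::finite \<Rightarrow> nat) \<Rightarrow> real) \<Rightarrow> real^'n \<Rightarrow> real^'n \<Rightarrow> real" where
  "pder p c x h = (\<Sum>\<alpha>\<in>multi_indices p. c \<alpha> *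
     (\<Sum>j\<in>UNIV. of_nat (\<alpha> j) * h $ j * (x $ j) ^ (\<alpha> j - 1) * (\<Prod>k\<in>UNIV - {j}. (x $ k) ^ \<alpha> k)))"

lemma poly_space_iff: "v \<in> poly_space p \<longleftrightarrow> (\<exists>c. v = pfun p c)"
  unfolding poly_space_def pfun_def by auto

lemma pfun_has_derivative: "(pfun p c has_derivative pder p c x) (at x)"
  unfolding pfun_def pder_def
  apply (rule derivative_eq_intros refl bounded_linear.has_derivative[OF bounded_linear_vec_nth] has_derivative_ident)+
  done

lemma dd_pfun: "dd w (pfun p c) x = pder p c x w"
proof -
  have lin: "linear (pder p c x)"
    using pfun_has_derivative[of p c x] has_derivative_linear by blast
  have "((\<lambda>t. pfun p c (x + t *\<^sub>R w)) has_derivative (\<lambda>t. pder p c x (t *\<^sub>R w))) (at 0)"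
  proof (rule has_derivative_compose[where g="pfun p c"])
    show "((\<lambda>t. x + t *\<^sub>R w) has_derivative (\<lambda>t. t *\<^sub>R w)) (at 0)"
      by (auto intro!: derivative_eq_intros)
    show "(pfun p c has_derivative pder p c x) (at (x + 0 *\<^sub>R w))"
      using pfun_has_derivative[of p c x] by simp
  qed
  then have "((\<lambda>t. pfun p c (x + t *\<^sub>R w)) has_real_derivative (pder p c x w)) (at 0)"
  proof -
    have "(\<lambda>t. t * pder p c x w) = (*) (pder p c x w)" by (auto simp: fun_eq_iff)
    then show ?thesis using lin \<open>((\<lambda>t. pfun p c (x + t *\<^sub>R w)) has_derivative (\<lambda>t. pder p c x (t *\<^sub>R w))) (at 0)\<close>
      by (simp add: has_field_derivative_def linear.scaleR)
  qed
  then show ?thesis unfolding dd_def by (rule DERIV_imp_deriv)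
qed

lemma poly_line:
  fixes v :: "real^'n \<Rightarrow> real"
  assumes "v \<in> poly_space p"
  shows "\<exists>q. degree q \<le> p \<and> (\<forall>t. v (x + t *\<^sub>R w) = poly q t)"
proof -
  obtain c where v: "v = pfun p c" using assms poly_space_iff by blast
  define q where "q = (\<Sum>\<alpha>\<in>multi_indices p. smult (c \<alpha>) (\<Prod>i\<in>UNIV. [:x $ i, w $ i:] ^ \<alpha> i))"
  have "poly q t = v (x + t *\<^sub>R w)" for t
    unfolding q_def v pfun_def by (simp add: poly_sum poly_prod poly_power algebra_simps)
  moreover have "degree q \<le> p"
  proof (cases "finite (multi_indices p :: ('n \<Rightarrow> nat) set)")
    case True
    show ?thesis unfolding q_def
    proof (rule degree_sum_le[OF True])
      fix \<alpha> :: "'n \<Rightarrow> nat" assume a: "\<alpha> \<in> multi_indices p"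
      have "degree (smult (c \<alpha>) (\<Prod>i\<in>UNIV. [:x $ i, w $ i:] ^ \<alpha> i)) \<le> degree (\<Prod>i\<in>UNIV. [:x $ i, w $ i:] ^ \<alpha> i)"
        by (rule degree_smult_le)
      also have "\<dots> \<le> (\<Sum>i\<in>UNIV. degree ([:x $ i, w $ i:] ^ \<alpha> i))"
        using degree_prod_sum_le[of UNIV "\<lambda>i. [:x $ i, w $ i:] ^ \<alpha> i"] by simp
      also have "\<dots> \<le> (\<Sum>i\<in>UNIV. \<alpha> i)"
      proof (rule sum_mono)
        fix i
        have "degree ([:x $ i, w $ i:] ^ \<alpha> i) \<le> degree [:x $ i, w $ i:] * \<alpha> i" by (rule degree_power_le)
        also have "\<dots> \<le> \<alpha> i" by (cases "w $ i = 0") auto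
        finally show "degree ([:x $ i, w $ i:] ^ \<alpha> i) \<le> \<alpha> i" .
      qed
      also have "\<dots> \<le> p" using a by (simp add: multi_indices_def)
      finally show "degree (smult (c \<alpha>) (\<Prod>i\<in>UNIV. [:x $ i, w $ i:] ^ \<alpha> i)) \<le> p" .
    qed
  next
    case False then show ?thesis by (simp add: q_def)
  qed
  ultimately show ?thesis by metis
qed

lemma dd_line:
  assumes "\<And>t. v (x + t *\<^sub>R w) = poly q t"
  shows "dd w v (x + s *\<^sub>R w) = poly (pderiv q) s"
proof -
  have "(\<lambda>t. v (x + s *\<^sub>R w + t *\<^sub>R w)) = (\<lambda>t. poly q (s + t))"
    using assms by (metis add.assoc scaleR_add_left)
  moreover have "((\<lambda>t. poly q (s + t)) has_real_derivative poly (pderiv q) s) (at 0)"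
    using DERIV_shift[of "poly q" "poly (pderiv q) s" 0 s] poly_DERIV[of q s]
    by (simp add: add.commute)
  ultimately show ?thesis unfolding dd_def by (simp add: DERIV_imp_deriv)
qed




lemma int_sq_nonneg: "0 \<le> integral {a..b} (\<lambda>s. (poly q s)\<^sup>2 :: real)"
  by (rule Henstock_Kurzweil_Integration.integral_nonneg) (auto intro!: integrable_continuous_interval continuous_intros)

lemma C1_prop:
  fixes q :: "real poly"
  assumes "degree q \<le> p"
  shows "0 \<le> best_const_1 p" and
   "integral {0..1} (\<lambda>s. (poly (pderiv q) s)\<^sup>2) \<le> (best_const_1 p)\<^sup>2 * integral {0..1} (\<lambda>s. (poly q s)\<^sup>2)"
proof -
  define S where "S = {C. 0 \<le> C \<and> (\<forall>q :: real poly. degree q \<le> p \<longrightarrow>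
        L2_norm_on {0..1} (poly (pderiv q)) \<le> C * L2_norm_on {0..1} (poly q))}"
  have B: "best_const_1 p = Inf S" unfolding best_const_1_def S_def by simp
  have ne: "S \<noteq> {}" using C1_nonempty[of p] unfolding S_def by auto
  show pos: "0 \<le> best_const_1 p" unfolding B by (rule cInf_greatest[OF ne]) (auto simp: S_def)
  have "L2_norm_on {0..1} (poly (pderiv q)) \<le> best_const_1 p * L2_norm_on {0..1} (poly q)"
  proof (cases "L2_norm_on {0..1} (poly q) = 0")
    case True
    obtain C where "C \<in> S" using ne by auto
    then show ?thesis using assms True by (auto simp: S_def)
  next
    case False
    have nn: "0 \<le> L2_norm_on {0..1} (poly q)" unfolding L2_norm_on_def by (simp add: int_sq_nonneg)
    then have pos': "0 < L2_norm_on {0..1} (poly q)" using False by simp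
    have "L2_norm_on {0..1} (poly (pderiv q)) / L2_norm_on {0..1} (poly q) \<le> Inf S"
    proof (rule cInf_greatest[OF ne])
      fix C assume "C \<in> S"
      then have "L2_norm_on {0..1} (poly (pderiv q)) \<le> C * L2_norm_on {0..1} (poly q)"
        using assms by (auto simp: S_def)
      then show "L2_norm_on {0..1} (poly (pderiv q)) / L2_norm_on {0..1} (poly q) \<le> C"
        using pos' by (simp add: divide_le_eq)
    qed
    then show ?thesis using pos' B by (simp add: divide_le_eq mult.commute)
  qed
  then have "sqrt (integral {0..1} (\<lambda>s. (poly (pderiv q) s)\<^sup>2)) \<le> best_const_1 p * sqrt (integral {0..1} (\<lambda>s. (poly q s)\<^sup>2))"
    by (simp add: L2_norm_on_def)
  then have "(sqrt (integral {0..1} (\<lambda>s. (poly (pderiv q) s)\<^sup>2)))\<^sup>2 \<le> (best_const_1 p * sqrt (integral {0..1} (\<lambda>s. (poly q s)\<^sup>2)))\<^sup>2"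
    by (rule power_mono) (simp add: int_sq_nonneg)
  moreover have "0 \<le> integral {0..1} (\<lambda>s. (poly q s)\<^sup>2)" by (rule int_sq_nonneg)
  moreover have "0 \<le> integral {0..1} (\<lambda>s. (poly (pderiv q) s)\<^sup>2)" by (rule int_sq_nonneg)
  ultimately show "integral {0..1} (\<lambda>s. (poly (pderiv q) s)\<^sup>2) \<le> (best_const_1 p)\<^sup>2 * integral {0..1} (\<lambda>s. (poly q s)\<^sup>2)"
    by (simp add: power_mult_distrib)
qed

lemma subst01:
  fixes f :: "real \<Rightarrow> real"
  assumes "a < b" "continuous_on {a..b} f"
  shows "integral {0..1} (\<lambda>s. f (a + (b - a) * s)) = integral {a..b} f / (b - a)"
proof -
  have le: "a + (b-a)*x \<le> b" if "0 \<le> x" "x \<le> 1" for x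
  proof -
    have "(b-a)*x \<le> (b-a)*1" by (rule mult_left_mono) (use that assms in auto)
    then show ?thesis by simp
  qed
  have "((\<lambda>s. (b - a) *\<^sub>R f (a + (b - a) * s)) has_integral (integral {a + (b-a)*0..a + (b-a)*1} f)) {0..1}"
    by (rule has_integral_substitution[where c=a and d=b]) (use assms le in \<open>auto intro!: derivative_eq_intros continuous_intros simp: mult_le_cancel_left1 add_increasing2\<close>)
  then have "((\<lambda>s. (b - a) * f (a + (b - a) * s)) has_integral (integral {a..b} f)) {0..1}" by simp
  from has_integral_mult_right[OF this, of "1/(b-a)"]
  have H: "((\<lambda>s. 1/(b-a) * ((b - a) * f (a + (b - a) * s))) has_integral (1/(b-a) * integral {a..b} f)) {0..1}" .
  have E: "(\<lambda>s. 1/(b-a) * ((b - a) * f (a + (b - a) * s))) = (\<lambda>s. f (a + (b - a) * s))"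
    using assms(1) by (auto simp: fun_eq_iff)
  from H have "((\<lambda>s. f (a + (b - a) * s)) has_integral (integral {a..b} f / (b - a))) {0..1}"
    unfolding E by simp
  then show ?thesis by (rule integral_unique)
qed

lemma line_ineq:
  fixes q :: "real poly"
  assumes "degree q \<le> p" "0 < c" "c \<le> b - a"
  shows "integral {a..b} (\<lambda>s. (poly (pderiv q) s)\<^sup>2) \<le> (best_const_1 p / c)\<^sup>2 * integral {a..b} (\<lambda>s. (poly q s)\<^sup>2)"
proof -
  define C where "C = best_const_1 p"
  have ab: "a < b" using assms by simp
  define r where "r = q \<circ>\<^sub>p [:a, b - a:]"
  have dr: "degree r \<le> p" unfolding r_def
    using degree_pcompose[of q "[:a, b - a:]"] assms(1) by (cases "b - a = 0") auto
  have pr: "poly r s = poly q (a + (b - a) * s)" for s by (simp add: r_def poly_pcompose mult.commute)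
  have pdr: "poly (pderiv r) s = (b - a) * poly (pderiv q) (a + (b - a) * s)" for s
    by (simp add: r_def pderiv_pcompose poly_pcompose pderiv_pCons mult.commute)
  have I1: "integral {0..1} (\<lambda>s. (poly r s)\<^sup>2) = integral {a..b} (\<lambda>s. (poly q s)\<^sup>2) / (b - a)"
    unfolding pr by (rule subst01[OF ab, of "\<lambda>s. (poly q s)\<^sup>2"]) (auto intro!: continuous_intros)
  have "integral {0..1} (\<lambda>s. (poly (pderiv r) s)\<^sup>2) = integral {0..1} (\<lambda>s. (b - a)\<^sup>2 * (poly (pderiv q) (a + (b - a) * s))\<^sup>2)"
    unfolding pdr by (simp add: power_mult_distrib)
  also have "\<dots> = (b - a)\<^sup>2 * integral {0..1} (\<lambda>s. (poly (pderiv q) (a + (b - a) * s))\<^sup>2)"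
    by simp
  also have "\<dots> = (b - a)\<^sup>2 * (integral {a..b} (\<lambda>s. (poly (pderiv q) s)\<^sup>2) / (b - a))"
    by (subst subst01[OF ab, of "\<lambda>s. (poly (pderiv q) s)\<^sup>2"]) (auto intro!: continuous_intros)
  also have "\<dots> = (b - a) * integral {a..b} (\<lambda>s. (poly (pderiv q) s)\<^sup>2)"
    using ab by (simp add: power2_eq_square)
  finally have I2: "integral {0..1} (\<lambda>s. (poly (pderiv r) s)\<^sup>2) = (b - a) * integral {a..b} (\<lambda>s. (poly (pderiv q) s)\<^sup>2)" .
  define X where "X = integral {a..b} (\<lambda>s. (poly (pderiv q) s)\<^sup>2)"
  define Y where "Y = integral {a..b} (\<lambda>s. (poly q s)\<^sup>2)"
  from C1_prop(2)[OF dr] I1 I2 have H: "(b - a) * X \<le> C\<^sup>2 * (Y / (b - a))"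
    by (simp add: C_def X_def Y_def)
  have "X = ((b - a) * X) / (b - a)" using ab by simp
  also have "\<dots> \<le> (C\<^sup>2 * (Y / (b - a))) / (b - a)" by (rule divide_right_mono[OF H]) (use ab in simp)
  also have "\<dots> = C\<^sup>2 / (b - a)\<^sup>2 * Y" by (simp add: power2_eq_square)
  finally have "integral {a..b} (\<lambda>s. (poly (pderiv q) s)\<^sup>2) \<le> C\<^sup>2 / (b - a)\<^sup>2 * integral {a..b} (\<lambda>s. (poly q s)\<^sup>2)"
    by (simp add: X_def Y_def)
  also have "\<dots> \<le> C\<^sup>2 / c\<^sup>2 * integral {a..b} (\<lambda>s. (poly q s)\<^sup>2)"
    using assms by (intro mult_right_mono int_sq_nonneg divide_left_mono power_mono) auto
  finally show ?thesis by (simp add: C_def power_divide)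
qed



lemma region_bound:
  fixes v :: "real^'n \<Rightarrow> real" and w :: "real^'n" and G K :: "(real^'n) set"
  assumes v: "v \<in> poly_space p" and wi: "w $ i = 1" and c: "0 < c"
    and K[measurable]: "K \<in> sets borel" and G[measurable]: "G \<in> sets borel" and GK: "G \<subseteq> K"
    and dcont: "continuous_on UNIV (dd w v)" and vcont: "continuous_on UNIV v"
    and line: "\<And>x. \<exists>P a b. (\<forall>s. (x + s *\<^sub>R w \<in> K) = (P \<and> a \<le> s \<and> s \<le> b)) \<and>
                   (\<forall>s. x + s *\<^sub>R w \<in> G \<longrightarrow> c \<le> b - a)"
  shows "(\<integral>\<^sup>+x. indicator G x * ennreal ((dd w v x)\<^sup>2) \<partial>lborel)
          \<le> ennreal ((best_const_1 p / c)\<^sup>2) * (\<integral>\<^sup>+x. indicator K x * ennreal ((v x)\<^sup>2) \<partial>lborel)"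
proof -
  define M where "M = (best_const_1 p / c)\<^sup>2"
  have M0: "0 \<le> M" by (simp add: M_def)
  define \<psi> :: "real^'n \<Rightarrow> ennreal" where "\<psi> = indicator {x. 0 \<le> x$i \<and> x$i \<le> 1}"
  have [measurable]: "dd w v \<in> borel_measurable borel" using dcont by (rule borel_measurable_continuous_onI)
  have [measurable]: "v \<in> borel_measurable borel" using vcont by (rule borel_measurable_continuous_onI)
  have per_line: "(\<integral>\<^sup>+s. indicator G (x + s *\<^sub>R w) * ennreal ((dd w v (x + s *\<^sub>R w))\<^sup>2) \<partial>lborel)
      \<le> ennreal M * (\<integral>\<^sup>+s. indicator K (x + s *\<^sub>R w) * ennreal ((v (x + s *\<^sub>R w))\<^sup>2) \<partial>lborel)" for x
  proof -
    obtain q where dq: "degree q \<le> p" and q: "\<And>t. v (x + t *\<^sub>R w) = poly q t"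
      using poly_line[OF v] by blast
    have dl: "dd w v (x + s *\<^sub>R w) = poly (pderiv q) s" for s by (rule dd_line) (use q in auto)
    obtain P a b where Pab: "\<And>s. (x + s *\<^sub>R w \<in> K) = (P \<and> a \<le> s \<and> s \<le> b)"
       and Gc: "\<And>s. x + s *\<^sub>R w \<in> G \<Longrightarrow> c \<le> b - a"
      using line[of x] by blast
    show ?thesis
    proof (cases "\<exists>s. x + s *\<^sub>R w \<in> G")
      case False
      then have "(\<integral>\<^sup>+s. indicator G (x + s *\<^sub>R w) * ennreal ((dd w v (x + s *\<^sub>R w))\<^sup>2) \<partial>lborel) = 0"
        by (simp add: indicator_def)
      then show ?thesis by simp
    next
      case True
      then obtain s0 where s0: "x + s0 *\<^sub>R w \<in> G" by blast
      then have "P" and cab: "c \<le> b - a" using Gc GK Pab by auto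
      have int1: "((\<lambda>s. (poly (pderiv q) s)\<^sup>2) has_integral integral {a..b} (\<lambda>s. (poly (pderiv q) s)\<^sup>2)) {a..b}"
        by (intro integrable_integral integrable_continuous_interval continuous_intros)
      have int2: "((\<lambda>s. (poly q s)\<^sup>2) has_integral integral {a..b} (\<lambda>s. (poly q s)\<^sup>2)) {a..b}"
        by (intro integrable_integral integrable_continuous_interval continuous_intros)
      have "(\<integral>\<^sup>+s. indicator G (x + s *\<^sub>R w) * ennreal ((dd w v (x + s *\<^sub>R w))\<^sup>2) \<partial>lborel)
          \<le> (\<integral>\<^sup>+s. ennreal ((poly (pderiv q) s)\<^sup>2) * indicator {a..b} s \<partial>lborel)"
        by (rule nn_integral_mono) (use GK Pab in \<open>auto simp: dl indicator_def\<close>)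
      also have "\<dots> = ennreal (integral {a..b} (\<lambda>s. (poly (pderiv q) s)\<^sup>2))"
        by (rule nn_integral_has_integral_lebesgue'[OF _ int1]) simp
      also have "\<dots> \<le> ennreal (M * integral {a..b} (\<lambda>s. (poly q s)\<^sup>2))"
        using line_ineq[OF dq c cab] unfolding M_def by (rule ennreal_leI)
      also have "\<dots> = ennreal M * ennreal (integral {a..b} (\<lambda>s. (poly q s)\<^sup>2))"
        using M0 int_sq_nonneg by (simp add: ennreal_mult)
      also have "ennreal (integral {a..b} (\<lambda>s. (poly q s)\<^sup>2)) = (\<integral>\<^sup>+s. ennreal ((poly q s)\<^sup>2) * indicator {a..b} s \<partial>lborel)"
        by (rule nn_integral_has_integral_lebesgue'[OF _ int2, symmetric]) simp
      also have "\<dots> = (\<integral>\<^sup>+s. indicator K (x + s *\<^sub>R w) * ennreal ((v (x + s *\<^sub>R w))\<^sup>2) \<partial>lborel)"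
        by (rule nn_integral_cong) (use \<open>P\<close> Pab in \<open>auto simp: q indicator_def\<close>)
      finally show ?thesis .
    qed
  qed
  have "(\<integral>\<^sup>+x. indicator G x * ennreal ((dd w v x)\<^sup>2) \<partial>lborel)
      = (\<integral>\<^sup>+x. \<psi> x * (\<integral>\<^sup>+s. indicator G (x + s *\<^sub>R w) * ennreal ((dd w v (x + s *\<^sub>R w))\<^sup>2) \<partial>lborel) \<partial>lborel)"
    unfolding \<psi>_def by (rule line_fubini[OF _ wi]) measurable
  also have "\<dots> \<le> (\<integral>\<^sup>+x. ennreal M * (\<psi> x * (\<integral>\<^sup>+s. indicator K (x + s *\<^sub>R w) * ennreal ((v (x + s *\<^sub>R w))\<^sup>2) \<partial>lborel)) \<partial>lborel)"
  proof (rule nn_integral_mono)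
    fix x
    have "\<psi> x * (\<integral>\<^sup>+s. indicator G (x + s *\<^sub>R w) * ennreal ((dd w v (x + s *\<^sub>R w))\<^sup>2) \<partial>lborel)
       \<le> \<psi> x * (ennreal M * (\<integral>\<^sup>+s. indicator K (x + s *\<^sub>R w) * ennreal ((v (x + s *\<^sub>R w))\<^sup>2) \<partial>lborel))"
      by (rule mult_left_mono[OF per_line]) simp
    also have "\<dots> = ennreal M * (\<psi> x * (\<integral>\<^sup>+s. indicator K (x + s *\<^sub>R w) * ennreal ((v (x + s *\<^sub>R w))\<^sup>2) \<partial>lborel))"
      by (rule mult.left_commute)
    finally show "\<psi> x * (\<integral>\<^sup>+s. indicator G (x + s *\<^sub>R w) * ennreal ((dd w v (x + s *\<^sub>R w))\<^sup>2) \<partial>lborel)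
       \<le> ennreal M * (\<psi> x * (\<integral>\<^sup>+s. indicator K (x + s *\<^sub>R w) * ennreal ((v (x + s *\<^sub>R w))\<^sup>2) \<partial>lborel))" .
  qed
  also have "\<dots> = ennreal M * (\<integral>\<^sup>+x. \<psi> x * (\<integral>\<^sup>+s. indicator K (x + s *\<^sub>R w) * ennreal ((v (x + s *\<^sub>R w))\<^sup>2) \<partial>lborel) \<partial>lborel)"
    apply (rule nn_integral_cmult)
    unfolding \<psi>_def by measurable
  also have "(\<integral>\<^sup>+x. \<psi> x * (\<integral>\<^sup>+s. indicator K (x + s *\<^sub>R w) * ennreal ((v (x + s *\<^sub>R w))\<^sup>2) \<partial>lborel) \<partial>lborel)
      = (\<integral>\<^sup>+x. indicator K x * ennreal ((v x)\<^sup>2) \<partial>lborel)"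
    unfolding \<psi>_def by (rule line_fubini[OF _ wi, symmetric]) measurable
  finally show ?thesis by (simp add: M_def)
qed



lemma axis_nth': "axis i (1::real) $ j = (if j = i then 1 else 0)"
  by (simp add: axis_def)

lemma mem_simplex: "x \<in> unit_simplex \<longleftrightarrow> (\<forall>j. 0 \<le> x $ j) \<and> (\<Sum>j\<in>UNIV. x $ j) \<le> 1"
  by (simp add: unit_simplex_def)

lemma sum_axis: "(\<Sum>j\<in>UNIV. (x + s *\<^sub>R axis i (1::real)) $ j) = (\<Sum>j\<in>UNIV. x $ j) + s"
proof -
  have "(x + s *\<^sub>R axis i (1::real)) $ j = x $ j + (if j = i then s else 0)" for j
    by (simp add: axis_nth')
  then show ?thesis by (simp add: sum.distrib)
qed

lemma sum_axis2:
  assumes "k \<noteq> i"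
  shows "(\<Sum>j\<in>UNIV. (x + s *\<^sub>R (axis i (1::real) - axis k 1)) $ j) = (\<Sum>j\<in>UNIV. x $ j)"
proof -
  have "(x + s *\<^sub>R (axis i (1::real) - axis k 1)) $ j = x $ j + (if j = i then s else 0) - (if j = k then s else 0)" for j
    using assms by (simp add: axis_nth')
  then show ?thesis by (simp add: sum.distrib sum_subtractf)
qed

lemma line_e:
  fixes x :: "real^'n" and G :: "(real^'n) set"
  assumes G: "G \<subseteq> {y. c \<le> 1 - (\<Sum>j\<in>UNIV. y $ j) + y $ i}"
  shows "\<exists>P a b. (\<forall>s. (x + s *\<^sub>R axis i 1 \<in> unit_simplex) = (P \<and> a \<le> s \<and> s \<le> b)) \<and>
                   (\<forall>s. x + s *\<^sub>R axis i 1 \<in> G \<longrightarrow> c \<le> b - a)"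
proof (intro exI conjI allI impI)
  fix s
  show "(x + s *\<^sub>R axis i 1 \<in> unit_simplex) =
        ((\<forall>j. j \<noteq> i \<longrightarrow> 0 \<le> x $ j) \<and> - (x $ i) \<le> s \<and> s \<le> 1 - (\<Sum>j\<in>UNIV. x $ j))"
    unfolding mem_simplex sum_axis
    by (auto simp: axis_nth' split: if_splits)
next
  fix s assume "x + s *\<^sub>R axis i 1 \<in> G"
  with G have "c \<le> 1 - (\<Sum>j\<in>UNIV. (x + s *\<^sub>R axis i 1) $ j) + (x + s *\<^sub>R axis i 1) $ i" by auto
  then show "c \<le> 1 - (\<Sum>j\<in>UNIV. x $ j) - - (x $ i)"
    unfolding sum_axis by (simp add: axis_nth')
qed

lemma line_eik:
  fixes x :: "real^'n" and G :: "(real^'n) set"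
  assumes ki: "k \<noteq> i" and G: "G \<subseteq> {y. y \<in> unit_simplex \<and> c \<le> y $ k}"
  shows "\<exists>P a b. (\<forall>s. (x + s *\<^sub>R (axis i 1 - axis k 1) \<in> unit_simplex) = (P \<and> a \<le> s \<and> s \<le> b)) \<and>
                   (\<forall>s. x + s *\<^sub>R (axis i 1 - axis k 1) \<in> G \<longrightarrow> c \<le> b - a)"
proof (intro exI conjI allI impI)
  fix s
  show "(x + s *\<^sub>R (axis i 1 - axis k 1) \<in> unit_simplex) =
        (((\<forall>j. j \<noteq> i \<and> j \<noteq> k \<longrightarrow> 0 \<le> x $ j) \<and> (\<Sum>j\<in>UNIV. x $ j) \<le> 1) \<and> - (x $ i) \<le> s \<and> s \<le> x $ k)"
    unfolding mem_simplex sum_axis2[OF ki]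
    using ki by (auto simp: axis_nth' split: if_splits)
next
  fix s assume "x + s *\<^sub>R (axis i 1 - axis k 1) \<in> G"
  with G have "c \<le> (x + s *\<^sub>R (axis i 1 - axis k 1)) $ k" and "0 \<le> (x + s *\<^sub>R (axis i 1 - axis k 1)) $ i"
    by (auto simp: mem_simplex simp del: vector_add_component vector_scaleR_component vector_minus_component)
  then show "c \<le> x $ k - - (x $ i)" using ki
    by (simp add: axis_nth')
qed



lemma sq_sum_le: "((a::real) + b)\<^sup>2 \<le> 2 * a\<^sup>2 + 2 * b\<^sup>2"
proof -
  have "0 \<le> (a - b)\<^sup>2" by simp
  then show ?thesis by (simp add: power2_diff power2_sum)
qed

lemma closed_simplex: "closed (unit_simplex :: (real^'n) set)"
  unfolding unit_simplex_def
  by (intro closed_Collect_conj closed_Collect_all closed_Collect_le continuous_intros)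

lemma main_ennreal:
  fixes v :: "real^'n \<Rightarrow> real" and i :: 'n and c0 c1 :: real
  assumes v: "v \<in> poly_space p" and c0: "0 < c0" and c1: "0 < c1"
    and cover: "\<And>x. x \<in> unit_simplex \<Longrightarrow> c0 \<le> 1 - (\<Sum>j\<in>UNIV. x $ j) + x $ i \<or> (\<exists>k. k \<noteq> i \<and> c1 \<le> x $ k)"
  shows "(\<integral>\<^sup>+x. indicator unit_simplex x * ennreal ((partial i v x)\<^sup>2) \<partial>lborel)
     \<le> ennreal ((best_const_1 p / c0)\<^sup>2 + real (CARD('n) - 1) * (4 * (best_const_1 p / c1)\<^sup>2))
        * (\<integral>\<^sup>+x. indicator unit_simplex x * ennreal ((v x)\<^sup>2) \<partial>lborel)"
proof -
  define K :: "(real^'n) set" where "K = unit_simplex"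
  define G0 where "G0 = K \<inter> {y. c0 \<le> 1 - (\<Sum>j\<in>UNIV. y $ j) + y $ i}"
  define G where "G k = K \<inter> {y. c1 \<le> y $ k}" for k
  define M0 where "M0 = (best_const_1 p / c0)\<^sup>2"
  define M1 where "M1 = (best_const_1 p / c1)\<^sup>2"
  define N where "N = (\<integral>\<^sup>+x. indicator K x * ennreal ((v x)\<^sup>2) \<partial>lborel)"
  define e where "e k = (axis k 1 :: real^'n)" for k
  obtain cc where vc: "v = pfun p cc" using v poly_space_iff by blast
  have ddf: "dd w v = (\<lambda>x. pder p cc x w)" for w by (rule ext) (simp add: vc dd_pfun)
  have dcont: "continuous_on UNIV (dd w v)" for w
    unfolding ddf pder_def by (intro continuous_intros)
  have vcont: "continuous_on UNIV v"
    unfolding vc pfun_def by (intro continuous_intros)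
  have [measurable]: "dd w v \<in> borel_measurable borel" for w using dcont[of w] by (rule borel_measurable_continuous_onI)
  have [measurable]: "v \<in> borel_measurable borel" using vcont by (rule borel_measurable_continuous_onI)
  have Kc: "closed K" unfolding K_def by (rule closed_simplex)
  have [measurable]: "K \<in> sets borel" using Kc by (rule borel_closed)
  have [measurable]: "G0 \<in> sets borel" unfolding G0_def
    by (intro borel_closed closed_Int Kc closed_Collect_le continuous_intros)
  have [measurable]: "G k \<in> sets borel" for k unfolding G_def
    by (intro borel_closed closed_Int Kc closed_Collect_le continuous_intros)
  have part: "partial i v x = dd (e i) v x" for x by (simp add: partial_def dd_def e_def)
  have split: "dd (e i) v x = dd (e i - e k) v x + dd (e k) v x" for x k
  proof -
    have "linear (pder p cc x)" using pfun_has_derivative[of p cc x] has_derivative_linear by blast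
    then show ?thesis unfolding ddf by (simp add: linear_diff)
  qed
  define F where "F x = indicator G0 x * ennreal ((dd (e i) v x)\<^sup>2) +
     (\<Sum>k\<in>UNIV-{i}. 2 * (indicator (G k) x * ennreal ((dd (e i - e k) v x)\<^sup>2)) +
                     2 * (indicator (G k) x * ennreal ((dd (e k) v x)\<^sup>2)))" for x
  have pw: "indicator K x * ennreal ((partial i v x)\<^sup>2) \<le> F x" for x
  proof (cases "x \<in> K")
    case False then show ?thesis by simp
  next
    case True
    show ?thesis
    proof (cases "x \<in> G0")
      case True
      then show ?thesis using \<open>x \<in> K\<close> unfolding F_def part by (simp add: add_increasing2)
    next
      case False
      with True cover[of x] obtain k where k: "k \<noteq> i" "c1 \<le> x $ k" by (auto simp: G0_def K_def)
      then have xG: "x \<in> G k" using True by (simp add: G_def)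
      have "indicator K x * ennreal ((partial i v x)\<^sup>2) = ennreal ((dd (e i - e k) v x + dd (e k) v x)\<^sup>2)"
        using True by (simp add: part split[of x k])
      also have "\<dots> \<le> ennreal (2 * (dd (e i - e k) v x)\<^sup>2 + 2 * (dd (e k) v x)\<^sup>2)"
        by (rule ennreal_leI[OF sq_sum_le])
      also have "\<dots> = 2 * (indicator (G k) x * ennreal ((dd (e i - e k) v x)\<^sup>2)) +
                     2 * (indicator (G k) x * ennreal ((dd (e k) v x)\<^sup>2))"
        using xG by (simp add: ennreal_plus ennreal_mult)
      also have "\<dots> \<le> (\<Sum>k\<in>UNIV-{i}. 2 * (indicator (G k) x * ennreal ((dd (e i - e k) v x)\<^sup>2)) +
                     2 * (indicator (G k) x * ennreal ((dd (e k) v x)\<^sup>2)))"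
        by (rule member_le_sum[where f="\<lambda>k. 2 * (indicator (G k) x * ennreal ((dd (e i - e k) v x)\<^sup>2)) +
                     2 * (indicator (G k) x * ennreal ((dd (e k) v x)\<^sup>2))"]) (use k in auto)
      also have "\<dots> \<le> F x" unfolding F_def by (simp add: add_increasing)
      finally show ?thesis .
    qed
  qed
  have E0: "(\<integral>\<^sup>+x. indicator G0 x * ennreal ((dd (e i) v x)\<^sup>2) \<partial>lborel) \<le> ennreal M0 * N"
    unfolding M0_def N_def
  proof (rule region_bound[OF v _ c0])
    show "e i $ i = 1" by (simp add: e_def)
    show "G0 \<subseteq> K" by (auto simp: G0_def)
    fix x show "\<exists>P a b. (\<forall>s. (x + s *\<^sub>R e i \<in> K) = (P \<and> a \<le> s \<and> s \<le> b)) \<and> (\<forall>s. x + s *\<^sub>R e i \<in> G0 \<longrightarrow> c0 \<le> b - a)"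
      unfolding K_def e_def by (rule line_e) (auto simp: G0_def)
  qed (auto intro: dcont vcont)
  have E1: "(\<integral>\<^sup>+x. indicator (G k) x * ennreal ((dd (e i - e k) v x)\<^sup>2) \<partial>lborel) \<le> ennreal M1 * N" if ki: "k \<noteq> i" for k
    unfolding M1_def N_def
  proof (rule region_bound[OF v _ c1])
    show "(e i - e k) $ i = 1" using ki by (simp add: e_def axis_nth')
    show "G k \<subseteq> K" by (auto simp: G_def)
    fix x show "\<exists>P a b. (\<forall>s. (x + s *\<^sub>R (e i - e k) \<in> K) = (P \<and> a \<le> s \<and> s \<le> b)) \<and> (\<forall>s. x + s *\<^sub>R (e i - e k) \<in> G k \<longrightarrow> c1 \<le> b - a)"
      unfolding K_def e_def by (rule line_eik[OF ki]) (auto simp: G_def K_def)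
  qed (auto intro: dcont vcont)
  have E2: "(\<integral>\<^sup>+x. indicator (G k) x * ennreal ((dd (e k) v x)\<^sup>2) \<partial>lborel) \<le> ennreal M1 * N" for k
    unfolding M1_def N_def
  proof (rule region_bound[OF v _ c1])
    show "e k $ k = 1" by (simp add: e_def)
    show "G k \<subseteq> K" by (auto simp: G_def)
    fix x show "\<exists>P a b. (\<forall>s. (x + s *\<^sub>R e k \<in> K) = (P \<and> a \<le> s \<and> s \<le> b)) \<and> (\<forall>s. x + s *\<^sub>R e k \<in> G k \<longrightarrow> c1 \<le> b - a)"
      unfolding K_def e_def by (rule line_e) (auto simp: G_def K_def mem_simplex)
  qed (auto intro: dcont vcont)
  have "(\<integral>\<^sup>+x. indicator K x * ennreal ((partial i v x)\<^sup>2) \<partial>lborel) \<le> (\<integral>\<^sup>+x. F x \<partial>lborel)"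
    by (rule nn_integral_mono) (rule pw)
  also have "\<dots> = (\<integral>\<^sup>+x. indicator G0 x * ennreal ((dd (e i) v x)\<^sup>2) \<partial>lborel) +
     (\<Sum>k\<in>UNIV-{i}. 2 * (\<integral>\<^sup>+x. indicator (G k) x * ennreal ((dd (e i - e k) v x)\<^sup>2) \<partial>lborel) +
                     2 * (\<integral>\<^sup>+x. indicator (G k) x * ennreal ((dd (e k) v x)\<^sup>2) \<partial>lborel))"
    unfolding F_def
    by (simp add: nn_integral_add nn_integral_sum nn_integral_cmult)
  also have "\<dots> \<le> ennreal M0 * N + (\<Sum>k\<in>UNIV-{i}. 2 * (ennreal M1 * N) + 2 * (ennreal M1 * N))"
    by (intro add_mono E0 sum_mono mult_left_mono E1 E2) auto
  also have "\<dots> = ennreal (M0 + real (CARD('n) - 1) * (4 * M1)) * N"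
  proof -
    have M0n: "0 \<le> M0" and M1n: "0 \<le> M1" by (simp_all add: M0_def M1_def)
    have cd: "card (UNIV - {i}) = CARD('n) - 1" by (simp add: card_Diff_singleton)
    have "(\<Sum>k\<in>UNIV-{i}. 2 * (ennreal M1 * N) + 2 * (ennreal M1 * N)) = of_nat (CARD('n) - 1) * (4 * (ennreal M1 * N))"
    proof -
      have "2 * (ennreal M1 * N) + 2 * (ennreal M1 * N) = 4 * (ennreal M1 * N)"
        by (metis distrib_right numeral_Bit0 numeral_One one_add_one)
      then show ?thesis by (simp add: cd)
    qed
    moreover have "ennreal (M0 + real (CARD('n) - 1) * (4 * M1)) = ennreal M0 + of_nat (CARD('n) - 1) * (4 * ennreal M1)"
      using M0n M1n by (simp add: ennreal_plus ennreal_mult ennreal_of_nat_eq_real_of_nat)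
    ultimately show ?thesis by (simp add: distrib_right mult.assoc)
  qed
  finally show ?thesis by (simp add: K_def N_def M0_def M1_def)
qed



lemma compact_simplex: "compact (unit_simplex :: (real^'n) set)"
proof -
  have "bounded (unit_simplex :: (real^'n) set)"
    unfolding bounded_iff
  proof (intro exI ballI)
    fix x :: "real^'n" assume x: "x \<in> unit_simplex"
    have "norm x \<le> (\<Sum>j\<in>UNIV. \<bar>x $ j\<bar>)" by (rule norm_le_l1_cart)
    also have "\<dots> = (\<Sum>j\<in>UNIV. x $ j)" using x by (simp add: mem_simplex)
    also have "\<dots> \<le> 1" using x by (simp add: mem_simplex)
    finally show "norm x \<le> 1" .
  qed
  then show ?thesis using closed_simplex by (simp add: compact_eq_bounded_closed)
qed

lemma nn_to_integral:
  fixes f :: "real^'n \<Rightarrow> real"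
  assumes "continuous_on UNIV f"
  shows "(\<integral>\<^sup>+x. indicator unit_simplex x * ennreal ((f x)\<^sup>2) \<partial>lborel) = ennreal (integral unit_simplex (\<lambda>x. (f x)\<^sup>2))"
proof -
  have c: "continuous_on unit_simplex (\<lambda>x. (f x)\<^sup>2)"
    by (intro continuous_intros continuous_on_subset[OF assms]) auto
  have "set_integrable lborel unit_simplex (\<lambda>x. (f x)\<^sup>2)"
    unfolding set_integrable_def by (rule borel_integrable_compact[OF compact_simplex c])
  then have "(\<lambda>x. (f x)\<^sup>2) integrable_on unit_simplex" by (rule set_borel_integral_eq_integral(1))
  then have "((\<lambda>x. (f x)\<^sup>2) has_integral integral unit_simplex (\<lambda>x. (f x)\<^sup>2)) unit_simplex"
    by (rule integrable_integral)
  from nn_integral_has_integral_lebesgue'[OF _ this] show ?thesis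
    by (simp add: mult.commute)
qed

lemma simplex_integrable:
  fixes f :: "real^'n \<Rightarrow> real"
  assumes "continuous_on UNIV f"
  shows "(\<lambda>x. (f x)\<^sup>2) integrable_on unit_simplex"
proof -
  have c: "continuous_on unit_simplex (\<lambda>x. (f x)\<^sup>2)"
    by (intro continuous_intros continuous_on_subset[OF assms]) auto
  have "set_integrable lborel unit_simplex (\<lambda>x. (f x)\<^sup>2)"
    unfolding set_integrable_def by (rule borel_integrable_compact[OF compact_simplex c])
  then show ?thesis by (rule set_borel_integral_eq_integral(1))
qed

lemma num_bound: "1 \<le> m \<Longrightarrow> 4 + 16 * (real m)^3 \<le> 5/2 * 8^m"
proof (induct m rule: dec_induct)
  case base then show ?case by simp
next
  case (step m)
  have "(real m + 1)^3 \<le> (2 * real m)^3"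
    using step(1) by (intro power_mono) auto
  then have "4 + 16 * (real (Suc m))^3 \<le> 8 * (4 + 16 * (real m)^3)"
    by (simp add: power_mult_distrib add.commute)
  also have "\<dots> \<le> 8 * (5/2 * 8^m)" using step(3) by simp
  finally show ?case by simp
qed



lemma key_ineq:
  fixes v :: "real^'n \<Rightarrow> real" and i :: 'n
  assumes v: "v \<in> poly_space p"
  shows "integral unit_simplex (\<lambda>x. (partial i v x)\<^sup>2)
     \<le> (sqrt 5 / 4 * (2 * sqrt 2) ^ CARD('n) * best_const_1 p)\<^sup>2 * integral unit_simplex (\<lambda>x. (v x)\<^sup>2)"
proof -
  define d where "d = CARD('n)"
  define C where "C = best_const_1 p"
  have C0: "0 \<le> C" unfolding C_def by (rule C1_prop(1)[of "0::real poly"]) simp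
  have Mc2: "(sqrt 5 / 4 * (2 * sqrt 2) ^ d)\<^sup>2 = 5/16 * 8^d"
  proof -
    have a: "(sqrt 5 / 4)\<^sup>2 = (5/16::real)" by (simp add: power_divide)
    have b: "(2 * sqrt 2)\<^sup>2 = (8::real)" by (simp add: power_mult_distrib)
    have c: "((2 * sqrt 2) ^ d)\<^sup>2 = ((2 * sqrt 2)\<^sup>2) ^ d"
    proof -
      have "((2 * sqrt 2) ^ d)\<^sup>2 = (2 * sqrt 2) ^ (d * 2)" by (rule power_mult[symmetric])
      also have "\<dots> = (2 * sqrt 2) ^ (2 * d)" by (simp only: mult.commute)
      also have "\<dots> = ((2 * sqrt 2)\<^sup>2) ^ d" by (rule power_mult)
      finally show ?thesis .
    qed
    have "(sqrt 5 / 4 * (2 * sqrt 2) ^ d)\<^sup>2 = (sqrt 5 / 4)\<^sup>2 * ((2 * sqrt 2) ^ d)\<^sup>2"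
      by (rule power_mult_distrib)
    also have "\<dots> = 5/16 * 8^d" unfolding a c b ..
    finally show ?thesis .
  qed
  obtain cc where vc: "v = pfun p cc" using v poly_space_iff by blast
  have pcont: "continuous_on UNIV (partial i v)"
  proof -
    have "partial i v = (\<lambda>x. pder p cc x (axis i 1))"
      by (rule ext) (simp add: partial_def dd_pfun[unfolded dd_def] vc)
    then show ?thesis unfolding pder_def by (simp, intro continuous_intros)
  qed
  have vcont: "continuous_on UNIV v"
    unfolding vc pfun_def by (intro continuous_intros)
  obtain c0 c1 where c0: "0 < c0" and c1: "0 < c1"
    and cover: "\<And>x. x \<in> unit_simplex \<Longrightarrow> c0 \<le> 1 - (\<Sum>j\<in>UNIV. x $ j) + x $ i \<or> (\<exists>k. k \<noteq> i \<and> c1 \<le> x $ k)"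
    and bnd: "(C / c0)\<^sup>2 + real (d - 1) * (4 * (C / c1)\<^sup>2) \<le> C\<^sup>2 * (5/16 * 8^d)"
  proof (cases "d = 1")
    case True
    then have U: "UNIV = {i}"
    proof -
      from True have "card (UNIV :: 'n set) = 1" by (simp add: d_def)
      then obtain z :: 'n where z: "UNIV = {z}" by (rule card_1_singletonE)
      have "i \<in> UNIV" by simp
      then have "i = z" unfolding z by simp
      then show ?thesis using z by simp
    qed
    show ?thesis
    proof (rule that[of 1 1])
      fix x :: "real^'n"
      have "(\<Sum>j\<in>UNIV. x $ j) = x $ i" by (subst U) simp
      then show "1 \<le> 1 - (\<Sum>j\<in>UNIV. x $ j) + x $ i \<or> (\<exists>k. k \<noteq> i \<and> 1 \<le> x $ k)" by simp
    next
      show "(C / 1)\<^sup>2 + real (d - 1) * (4 * (C / 1)\<^sup>2) \<le> C\<^sup>2 * (5/16 * 8^d)"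
        using True by simp
    qed auto
  next
    case False
    have "0 < d" unfolding d_def by simp
    then have d2: "2 \<le> d" using False by linarith
    show ?thesis
    proof (rule that[of "1/2" "1 / (2 * real (d - 1))"])
      show "0 < 1 / (2 * real (d - 1))" using d2 by simp
      fix x :: "real^'n" assume x: "x \<in> unit_simplex"
      show "1/2 \<le> 1 - (\<Sum>j\<in>UNIV. x $ j) + x $ i \<or> (\<exists>k. k \<noteq> i \<and> 1 / (2 * real (d - 1)) \<le> x $ k)"
      proof (rule ccontr)
        assume H: "\<not> ?thesis"
        define c1 where "c1 = 1 / (2 * real (d - 1))"
        have H1: "\<not> (1/2 \<le> 1 - (\<Sum>j\<in>UNIV. x $ j) + x $ i)" using H by blast
        have H2: "x $ k < c1" if "k \<noteq> i" for k
        proof (rule ccontr)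
          assume "\<not> x $ k < c1"
          then have "c1 \<le> x $ k" by (simp only: not_less)
          then show False using H that unfolding c1_def by blast
        qed
        have ne: "UNIV - {i} \<noteq> {}"
        proof
          assume "UNIV - {i} = {}"
          then have U1: "UNIV = {i}" by auto
          have "d = card {i}" unfolding d_def by (subst U1[symmetric]) (rule refl)
          then have "d = 1" by simp
          then show False using d2 by simp
        qed
        have "(\<Sum>j\<in>UNIV-{i}. x $ j) < (\<Sum>j\<in>UNIV-{i}. c1)"
        proof (rule sum_strict_mono[OF _ ne])
          show "finite (UNIV - {i})" by simp
        next
          fix j assume "j \<in> UNIV - {i}"
          then show "x $ j < c1" using H2 by blast
        qed
        also have "(\<Sum>j\<in>UNIV-{i}. c1) = real (d - 1) * c1"
          by (simp add: card_Diff_singleton d_def)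
        also have "real (d - 1) * c1 = 1/2" unfolding c1_def using d2 by simp
        finally have S1: "(\<Sum>j\<in>UNIV-{i}. x $ j) < 1/2" .
        have S2: "(\<Sum>j\<in>UNIV. x $ j) = x $ i + (\<Sum>j\<in>UNIV-{i}. x $ j)"
          by (rule sum.remove) simp_all
        from H1 S1 S2 show False by linarith
      qed
    next
      have "(C / (1/2))\<^sup>2 + real (d - 1) * (4 * (C / (1 / (2 * real (d - 1))))\<^sup>2)
            = C\<^sup>2 * (4 + 16 * (real (d - 1))^3)"
      proof -
        have gen: "(C / (1/2))\<^sup>2 + t * (4 * (C / (1 / (2 * t)))\<^sup>2) = C\<^sup>2 * (4 + 16 * t^3)" for t :: real
        proof -
          have e1: "C / (1/2) = 2 * C" by simp
          have e2: "C / (1 / (2 * t)) = 2 * t * C" by simp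
          show ?thesis unfolding e1 e2 by (simp add: power2_eq_square power3_eq_cube algebra_simps)
        qed
        show ?thesis by (rule gen)
      qed
      also have "\<dots> \<le> C\<^sup>2 * (5/2 * 8^(d-1))"
        by (rule mult_left_mono[OF num_bound]) (use d2 in auto)
      also have "\<dots> = C\<^sup>2 * (5/16 * 8^d)"
      proof -
        have "d = Suc (d - 1)" using d2 by simp
        then have "(8::real)^d = 8^(Suc (d-1))" by (rule arg_cong)
        then have "(8::real)^d = 8 * 8^(d-1)" by (simp only: power_Suc)
        then show ?thesis by (simp only: mult.assoc)
      qed
      finally show "(C / (1/2))\<^sup>2 + real (d - 1) * (4 * (C / (1 / (2 * real (d - 1))))\<^sup>2) \<le> C\<^sup>2 * (5/16 * 8^d)" .
    qed simp
  qed
  define \<beta> where "\<beta> = (C / c0)\<^sup>2 + real (CARD('n) - 1) * (4 * (C / c1)\<^sup>2)"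
  define I where "I = integral unit_simplex (\<lambda>x. (v x)\<^sup>2)"
  define J where "J = integral unit_simplex (\<lambda>x. (partial i v x)\<^sup>2)"
  have I1: "0 \<le> I" unfolding I_def
    by (rule Henstock_Kurzweil_Integration.integral_nonneg[OF simplex_integrable[OF vcont]]) simp
  have b0: "0 \<le> \<beta>" unfolding \<beta>_def by (intro add_nonneg_nonneg mult_nonneg_nonneg) auto
  have "ennreal J \<le> ennreal \<beta> * ennreal I"
    using main_ennreal[OF v c0 c1 cover] unfolding nn_to_integral[OF pcont] nn_to_integral[OF vcont] C_def \<beta>_def I_def J_def .
  also have "\<dots> = ennreal (\<beta> * I)" by (rule ennreal_mult[OF b0 I1, symmetric])
  finally have "J \<le> \<beta> * I" using ennreal_le_iff[OF mult_nonneg_nonneg[OF b0 I1]] by blast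
  also have "\<dots> \<le> (C\<^sup>2 * (5/16 * 8^d)) * I"
    using bnd I1 unfolding \<beta>_def d_def by (rule mult_right_mono)
  also have "C\<^sup>2 * (5/16 * 8^d) = (sqrt 5 / 4 * (2 * sqrt 2) ^ CARD('n) * best_const_1 p)\<^sup>2"
  proof -
    have "(sqrt 5 / 4 * (2 * sqrt 2) ^ d * C)\<^sup>2 = (sqrt 5 / 4 * (2 * sqrt 2) ^ d)\<^sup>2 * C\<^sup>2"
      by (rule power_mult_distrib)
    also have "\<dots> = 5/16 * 8^d * C\<^sup>2" unfolding Mc2 ..
    finally have E: "(sqrt 5 / 4 * (2 * sqrt 2) ^ d * C)\<^sup>2 = 5/16 * 8^d * C\<^sup>2" .
    show ?thesis unfolding d_def[symmetric] C_def[symmetric] E by (rule mult.commute)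
  qed
  finally show ?thesis unfolding I_def J_def .
qed

theorem theoremA2:
  fixes p :: nat
  shows "best_const_simplex TYPE('n::finite) p
           \<le> sqrt 5 / 4 * (2 * sqrt 2) ^ CARD('n) * best_const_1 p"
proof -
  define M where "M = sqrt 5 / 4 * (2 * sqrt 2) ^ CARD('n) * best_const_1 p"
  have C0: "0 \<le> best_const_1 p" by (rule C1_prop(1)[of "0::real poly"]) simp
  have M0: "0 \<le> M" unfolding M_def using C0 by simp
  define S where "S = {C. 0 \<le> C \<and>
     (\<forall>v \<in> (poly_space p :: (real ^ 'n \<Rightarrow> real) set). \<forall>i::'n.
        L2_norm_on (unit_simplex :: (real ^ 'n) set) (partial i v)
          \<le> C * L2_norm_on (unit_simplex :: (real ^ 'n) set) v)}"
  have "M \<in> S"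
    unfolding S_def
  proof (intro CollectI conjI ballI allI M0)
    fix v :: "real^'n \<Rightarrow> real" and i :: 'n assume v: "v \<in> poly_space p"
    have "L2_norm_on unit_simplex (partial i v) \<le> sqrt (M\<^sup>2 * integral unit_simplex (\<lambda>x. (v x)\<^sup>2))"
      unfolding L2_norm_on_def M_def by (rule real_sqrt_le_mono[OF key_ineq[OF v]])
    also have "\<dots> = M * L2_norm_on unit_simplex v"
      using M0 by (simp add: L2_norm_on_def real_sqrt_mult)
    finally show "L2_norm_on unit_simplex (partial i v) \<le> M * L2_norm_on unit_simplex v" .
  qed
  moreover have "bdd_below S" unfolding S_def by (rule bdd_belowI[of _ 0]) auto
  ultimately have "Inf S \<le> M" by (rule cInf_lower)
  then show ?thesis unfolding best_const_simplex_def S_def M_def by simp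
qed


end
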